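(* For every $j\ge1$ there is a short exact sequence of $A(2)_*$-comodules $$0\to\Sigma^{8j}N_1(j)\otimes N_1(1)\to N_1(2j+1)\to Q^{j-1}(A/\!/A(1))_*\to0.$$
   Context: $A_*$ is the mod $2$ dual Steenrod algebra with conjugate generators $\bar\xi_k$, $|\bar\xi_k|=2^k-1$; $A(i)_*$ is its quotient Hopf algebra dual to $A(i)$, and $(A/\!/A(i))_*=A_*\square_{A(i)_*}\mathbb{F}_2$; thus $(A/\!/A(1))_*=\mathbb{F}_2[\bar\xi_1^4,\bar\xi_2^2,\bar\xi_3,\bar\xi_4,\dots]$, $(A/\!/A(2))_*=\mathbb{F}_2[\bar\xi_1^8,\bar\xi_2^4,\bar\xi_3^2,\bar\xi_4,\dots]$, and $(A(2)/\!/A(1))_*=\Lambda[\bar\xi_1^4,\bar\xi_2^2,\bar\xi_3]$. Weight: $\bar\xi_k$ has weight $2^{k-1}$, multiplicatively. $N_i(j)\subset(A/\!/A(i))_*$ is the span of monomials of weight $\le2^{i+1}j$, $M_i(j)$ the span of monomials of weight exactly $2^{i+1}j$ (these are $A_*$-, resp. $A(i)_*$-subcomodules, and $(A/\!/A(2))_*=\bigoplus_kM_2(k)$ as $A(2)_*$-comodules). Let $\tau:(A/\!/A(1))_*\to(A/\!/A(2))_*\otimes(A(2)/\!/A(1))_*$ be the $\mathbb{F}_2$-linear isomorphism $\tau(\bar\xi_1^{8i_1+4\epsilon_1}\bar\xi_2^{4i_2+2\epsilon_2}\bar\xi_3^{2i_3+\epsilon_3}\bar\xi_4^{i_4}\cdots)=\bar\xi_1^{8i_1}\bar\xi_2^{4i_2}\bar\xi_3^{2i_3}\bar\xi_4^{i_4}\cdots\otimes\bar\xi_1^{4\epsilon_1}\bar\xi_2^{2\epsilon_2}\bar\xi_3^{\epsilon_3}$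 ($i_k\ge0$, $\epsilon_k\in\{0,1\}$). Put $F^j(A/\!/A(1))_*=\tau^{-1}\big((\bigoplus_{k\ge j}M_2(k))\otimes(A(2)/\!/A(1))_*\big)$; these form a decreasing filtration of $(A/\!/A(1))_*$ by $A(2)_*$-subcomodules, and $Q^j(A/\!/A(1))_*=(A/\!/A(1))_*/F^{j+1}(A/\!/A(1))_*$. $N_1(1)=\mathbb{F}_2\{1,\bar\xi_1^4,\bar\xi_2^2,\bar\xi_3\}$. $\Sigma^n$ shifts internal degree by $n$. *)

theory Defs
  imports Main "HOL-Library.Poly_Mapping" "HOL-Library.Z2"
begin

text \<open>
  The ground field F_2 is the type bit.  A monomial in the conjugate
  generators xibar_1, xibar_2, ... is an exponent vector m :: nat =>0 nat, where
  Poly_Mapping.lookup m k is the exponent of xibar_k (k >= 1; index 0 is never used).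
  An F_2-vector space with a distinguished basis 'b is 'b =>0 bit.
  The dual Steenrod algebra A_* is mono =>0 bit (a polynomial ring).
  For a vector space V with basis 'b, the tensor product A(2)_* (x) V is represented as
  mono =>0 ('b =>0 bit), i.e. sum_a a (x) v_a with a running over the monomial basis of A(2)_*.
\<close>

type_synonym mono = "nat \<Rightarrow>\<^sub>0 nat"
type_synonym 'b vec = "'b \<Rightarrow>\<^sub>0 bit"

text \<open>the monomial xibar_i^n, with xibar_0 = 1\<close>
definition xim :: "nat \<Rightarrow> nat \<Rightarrow> mono" where
  "xim i n = (if i = 0 then 0 else Poly_Mapping.single i n)"

definition Delta_xi :: "nat \<Rightarrow> mono \<Rightarrow>\<^sub>0 mono vec" where
  "Delta_xi k = (\<Sum>i\<in>{0..k}. Poly_Mapping.single (xim i 1)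
                    (Poly_Mapping.single (xim (k - i) (2 ^ i)) 1))"

text \<open>coproduct on a monomial (Delta is multiplicative)\<close>
definition Delta_mono :: "mono \<Rightarrow> mono \<Rightarrow>\<^sub>0 mono vec" where
  "Delta_mono m = (\<Prod>k\<in>Poly_Mapping.keys m. Delta_xi k ^ Poly_Mapping.lookup m k)"

definition tscal :: "bit \<Rightarrow> (mono \<Rightarrow>\<^sub>0 'b vec) \<Rightarrow> (mono \<Rightarrow>\<^sub>0 'b vec)" where
  "tscal c X = Poly_Mapping.map (Poly_Mapping.map (\<lambda>x. c * x)) X"

definition Delta :: "mono vec \<Rightarrow> mono \<Rightarrow>\<^sub>0 mono vec" where
  "Delta p = (\<Sum>m\<in>Poly_Mapping.keys p. tscal (Poly_Mapping.lookup p m) (Delta_mono m))"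

text \<open>monomial basis of A(2)_* = A_*/(xibar_1^8, xibar_2^4, xibar_3^2, xibar_4, ...)\<close>
definition A2mon :: "mono \<Rightarrow> bool" where
  "A2mon a \<longleftrightarrow> Poly_Mapping.keys a \<subseteq> {1,2,3} \<and> Poly_Mapping.lookup a 1 < 8 \<and> Poly_Mapping.lookup a 2 < 4 \<and> Poly_Mapping.lookup a 3 < 2"

text \<open>the projection A_* (x) V -> A(2)_* (x) V (A(2)_* is a quotient by a monomial ideal)\<close>
definition truncA2 :: "(mono \<Rightarrow>\<^sub>0 'b vec) \<Rightarrow> (mono \<Rightarrow>\<^sub>0 'b vec)" where
  "truncA2 X = (\<Sum>a\<in>Poly_Mapping.keys X \<inter> {a. A2mon a}. Poly_Mapping.single a (Poly_Mapping.lookup X a))"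

text \<open>A(2)_*-coaction on (sub-comodules of) A_*\<close>
definition psi2 :: "mono vec \<Rightarrow> mono \<Rightarrow>\<^sub>0 mono vec" where
  "psi2 p = truncA2 (Delta p)"

definition tensor :: "mono vec \<Rightarrow> mono vec \<Rightarrow> (mono \<times> mono) vec" where
  "tensor p q = (\<Sum>m\<in>Poly_Mapping.keys p. \<Sum>n\<in>Poly_Mapping.keys q.
                   Poly_Mapping.single (m, n) (Poly_Mapping.lookup p m * Poly_Mapping.lookup q n))"

text \<open>diagonal coaction on a tensor product: multiply the A_*-parts\<close>
definition tcomb :: "(mono \<Rightarrow>\<^sub>0 mono vec) \<Rightarrow> (mono \<Rightarrow>\<^sub>0 mono vec)
                      \<Rightarrow> (mono \<Rightarrow>\<^sub>0 (mono \<times> mono) vec)" where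
  "tcomb X Y = (\<Sum>a\<in>Poly_Mapping.keys X. \<Sum>b\<in>Poly_Mapping.keys Y.
                   Poly_Mapping.single (a + b) (tensor (Poly_Mapping.lookup X a) (Poly_Mapping.lookup Y b)))"

definition Delta_tens :: "(mono \<times> mono) vec \<Rightarrow> mono \<Rightarrow>\<^sub>0 (mono \<times> mono) vec" where
  "Delta_tens x = (\<Sum>mn\<in>Poly_Mapping.keys x.
      tscal (Poly_Mapping.lookup x mn) (tcomb (Delta_mono (fst mn)) (Delta_mono (snd mn))))"

definition psiT :: "(mono \<times> mono) vec \<Rightarrow> mono \<Rightarrow>\<^sub>0 (mono \<times> mono) vec" where
  "psiT x = truncA2 (Delta_tens x)"

definition weight :: "mono \<Rightarrow> nat" where
  "weight m = (\<Sum>k\<in>Poly_Mapping.keys m. Poly_Mapping.lookup m k * 2 ^ (k - 1))"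

definition deg :: "mono \<Rightarrow> nat" where
  "deg m = (\<Sum>k\<in>Poly_Mapping.keys m. Poly_Mapping.lookup m k * (2 ^ k - 1))"

text \<open>monomial bases of (A//A(1))_* and (A//A(2))_*\<close>
definition AA1mon :: "mono \<Rightarrow> bool" where
  "AA1mon m \<longleftrightarrow> 0 \<notin> Poly_Mapping.keys m \<and> 4 dvd Poly_Mapping.lookup m 1 \<and> 2 dvd Poly_Mapping.lookup m 2"

definition AA2mon :: "mono \<Rightarrow> bool" where
  "AA2mon m \<longleftrightarrow> 0 \<notin> Poly_Mapping.keys m \<and> 8 dvd Poly_Mapping.lookup m 1 \<and> 4 dvd Poly_Mapping.lookup m 2 \<and> 2 dvd Poly_Mapping.lookup m 3"

definition AA1 :: "mono vec set" where
  "AA1 = {p. \<forall>m\<in>Poly_Mapping.keys p. AA1mon m}"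

text \<open>N_1(j): span of monomials of (A//A(1))_* of weight <= 4j\<close>
definition N1basis :: "nat \<Rightarrow> mono set" where
  "N1basis j = {m. AA1mon m \<and> weight m \<le> 4 * j}"

definition N1 :: "nat \<Rightarrow> mono vec set" where
  "N1 j = {p. Poly_Mapping.keys p \<subseteq> N1basis j}"

text \<open>monomial basis of M_2(k): monomials of (A//A(2))_* of weight exactly 8k\<close>
definition M2basis :: "nat \<Rightarrow> mono set" where
  "M2basis k = {m. AA2mon m \<and> weight m = 8 * k}"

text \<open>tau on monomials: m = tauL m + tauR m, tauL m in (A//A(2))_*, tauR m in (A(2)//A(1))_*\<close>
definition tauR :: "mono \<Rightarrow> mono" where
  "tauR m = xim 1 (Poly_Mapping.lookup m 1 mod 8) + xim 2 (Poly_Mapping.lookup m 2 mod 4) + xim 3 (Poly_Mapping.lookup m 3 mod 2)"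

definition tauL :: "mono \<Rightarrow> mono" where
  "tauL m = m - tauR m"

text \<open>F^j (A//A(1))_* = tau^{-1}((sum_{k>=j} M_2(k)) (x) (A(2)//A(1))_*)\<close>
definition Fil :: "nat \<Rightarrow> mono vec set" where
  "Fil j = {p. \<forall>m\<in>Poly_Mapping.keys p. AA1mon m \<and> (\<exists>k\<ge>j. tauL m \<in> M2basis k)}"

text \<open>N_1(j) (x) N_1(1), with basis pairs of monomials\<close>
definition Src :: "nat \<Rightarrow> (mono \<times> mono) vec set" where
  "Src j = {x. Poly_Mapping.keys x \<subseteq> N1basis j \<times> N1basis 1}"

definition homog :: "('b \<Rightarrow> nat) \<Rightarrow> nat \<Rightarrow> 'b vec \<Rightarrow> bool" where
  "homog dg d x \<longleftrightarrow> (\<forall>b\<in>Poly_Mapping.keys x. dg b = d)"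

end

theory Submission imports Defs begin

abbreviation lk where "lk \<equiv> Poly_Mapping.lookup"
abbreviation ks where "ks \<equiv> Poly_Mapping.keys"
abbreviation sg where "sg \<equiv> Poly_Mapping.single"

lemma bit_add_self[simp]: "(x::bit) + x = 0" by (cases x) simp_all

lemma lookup_map: "lk (Poly_Mapping.map g p) k = (if lk p k = 0 then 0 else g (lk p k))"
  by (simp add: Poly_Mapping.map.rep_eq when_def)

lemma lookup_map0: "g 0 = 0 \<Longrightarrow> lk (Poly_Mapping.map g p) k = g (lk p k)"
  by (simp add: lookup_map)

lemma vec_add_self[simp]: "(p::'a \<Rightarrow>\<^sub>0 bit) + p = 0"
  by (rule poly_mapping_eqI) (simp add: lookup_add)

lemma B_add_self[simp]: "(p::'a \<Rightarrow>\<^sub>0 ('c \<Rightarrow>\<^sub>0 bit)) + p = 0"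
  by (rule poly_mapping_eqI) (simp add: lookup_add)

lemma vec_minus[simp]: "- (p::'a \<Rightarrow>\<^sub>0 bit) = p"
  by (rule minus_unique) simp

lemma B_minus[simp]: "- (p::'a \<Rightarrow>\<^sub>0 ('c \<Rightarrow>\<^sub>0 bit)) = p"
  by (rule minus_unique) simp

lemma vec_diff: "(p::'a \<Rightarrow>\<^sub>0 bit) - q = p + q"
  by (simp add: diff_conv_add_uminus)

lemma B_diff: "(p::'a \<Rightarrow>\<^sub>0 ('c \<Rightarrow>\<^sub>0 bit)) - q = p + q"
  by (simp add: diff_conv_add_uminus)

lemma frob2: fixes x y :: "'a::comm_ring_1" assumes "(1::'a) + 1 = 0" shows "(x+y)^2 = x^2 + y^2"
proof -
  have "(2::'a) = 0" using assms one_add_one[where 'a='a] by simp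
  then show ?thesis by (simp add: power2_sum)
qed

type_synonym BB = "mono \<Rightarrow>\<^sub>0 mono vec"

lemma B_one_one: "(1::BB) + 1 = 0" by (rule B_add_self)

lemma frobB2: "((x::BB)+y)^2 = x^2 + y^2"
proof -
  have "(x+y)^2 = x*x + y*x + (x*y + y*y)" unfolding power2_eq_square by (simp only: distrib_left distrib_right)
  also have "\<dots> = x*x + y*y + (x*y + x*y)" by (simp only: mult.commute[of y x] add_ac)
  also have "\<dots> = x^2 + y^2" by (simp only: B_add_self add_0_right power2_eq_square)
  finally show ?thesis .
qed

lemma frobBpow: "((x::BB)+y)^(2^r) = x^(2^r) + y^(2^r)"
proof (induction r)
  case (Suc r)
  have e: "\<And>z::BB. z^(2^Suc r) = (z^(2^r))^2"
    by (simp only: power_Suc2 power_mult)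
  show ?case unfolding e Suc.IH by (rule frobB2)
qed simp

lemma xim_add: "xim k (a + b) = xim k a + xim k b"
  by (simp add: xim_def single_add)

lemma xim_0[simp]: "xim k 0 = 0" "xim 0 e = 0"
  by (simp_all add: xim_def)

lemma lookup_xim: "lk (xim k e) i = (if k \<noteq> 0 \<and> i = k then e else 0)"
  by (simp add: xim_def lookup_single)

lemma pow_single_xim: "(sg (xim k e) (c::'b::comm_semiring_1)) ^ n = sg (xim k (n*e)) (c^n)"
  by (induction n) (simp_all add: mult_single xim_add)

lemma pow_single_single_xim: "(sg 0 (sg (xim k e) (1::bit)) :: BB) ^ n = sg 0 (sg (xim k (n*e)) 1)"
  by (induction n) (simp_all add: mult_single xim_add)

lemma lookup_trunc: "lk (truncA2 X) a = (if A2mon a then lk X a else 0)"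
proof -
  have "lk (truncA2 X) a = (\<Sum>b\<in>ks X \<inter> {a. A2mon a}. (if b = a then lk X b else 0))"
    by (simp add: truncA2_def lookup_sum lookup_single when_def)
  also have "\<dots> = (if a \<in> ks X \<inter> {a. A2mon a} then lk X a else 0)"
    by (simp add: sum.delta)
  finally show ?thesis by (auto simp: in_keys_iff)
qed

lemma trunc_add: "truncA2 (X + Y) = truncA2 X + truncA2 Y"
  by (rule poly_mapping_eqI) (simp add: lookup_trunc lookup_add)

lemma trunc_eq_iff: "truncA2 X = truncA2 Y \<longleftrightarrow> (\<forall>a. A2mon a \<longrightarrow> lk X a = lk Y a)"
  by (auto simp: poly_mapping_eq_iff lookup_trunc fun_eq_iff)

lemma trunc_zero_iff: "truncA2 X = 0 \<longleftrightarrow> (\<forall>a\<in>ks X. \<not> A2mon a)"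
  by (auto simp: poly_mapping_eq_iff lookup_trunc fun_eq_iff in_keys_iff)

lemma A2mon_add: "A2mon (a + b) \<Longrightarrow> A2mon a"
proof -
  assume h: "A2mon (a+b)"
  have k: "ks a \<subseteq> ks (a+b)"
    by (auto simp: in_keys_iff lookup_add)
  show ?thesis using h k unfolding A2mon_def
    by (auto simp: lookup_add)
qed

lemma trunc_mult_cong: assumes "truncA2 X = truncA2 X'" shows "truncA2 ((X::BB) * Y) = truncA2 (X' * Y)"
proof -
  have "truncA2 (X + X') = 0" using assms by (simp add: trunc_add)
  then have h: "\<forall>a\<in>ks (X+X'). \<not> A2mon a" by (simp add: trunc_zero_iff)
  have "\<forall>c\<in>ks ((X+X')*Y). \<not> A2mon c"
  proof
    fix c assume "c \<in> ks ((X+X')*Y)"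
    then obtain a b where "a \<in> ks (X+X')" "c = a + b" using keys_mult by blast
    then show "\<not> A2mon c" using h A2mon_add by blast
  qed
  then have "truncA2 ((X+X')*Y) = 0" by (simp add: trunc_zero_iff)
  then have "truncA2 (X*Y) + truncA2 (X'*Y) = 0" by (simp add: distrib_right trunc_add)
  then have "- truncA2 (X*Y) = truncA2 (X'*Y)" by (rule minus_unique)
  then show ?thesis by simp
qed

lemma trunc_mult_cong2: assumes "truncA2 X = truncA2 X'" shows "truncA2 ((Y::BB) * X) = truncA2 (Y * X')"
  by (subst (1 2) mult.commute) (rule trunc_mult_cong[OF assms])

lemma trunc_pow_cong: assumes "truncA2 X = truncA2 X'" shows "truncA2 ((X::BB) ^ n) = truncA2 (X' ^ n)"
proof (induction n)
  case (Suc n)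
  have "truncA2 (X^Suc n) = truncA2 (X * X^n)" by simp
  also have "\<dots> = truncA2 (X' * X^n)" by (rule trunc_mult_cong[OF assms])
  also have "\<dots> = truncA2 (X' * X'^n)" by (rule trunc_mult_cong2[OF Suc.IH])
  finally show ?case by simp
qed simp


definition addf :: "('a::monoid_add \<Rightarrow> 'b::monoid_add) \<Rightarrow> bool" where
  "addf F \<longleftrightarrow> (\<forall>x y. F (x + y) = F x + F y)"

lemma addf_zero: "addf F \<Longrightarrow> F 0 = (0::'b::cancel_comm_monoid_add)"
  unfolding addf_def by (metis add_0_right add_cancel_right_right)

lemma addf_sum: assumes "addf (F::'a::comm_monoid_add \<Rightarrow> 'b::cancel_comm_monoid_add)"
  shows "F (sum g I) = (\<Sum>i\<in>I. F (g i))"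
proof (cases "finite I")
  case True
  then show ?thesis
    by (induction I rule: finite_induct) (simp_all add: addf_zero[OF assms] assms[unfolded addf_def])
qed (simp add: addf_zero[OF assms])

lemma addf_comp: "addf F \<Longrightarrow> addf G \<Longrightarrow> addf (\<lambda>x. F (G x))"
  by (simp add: addf_def)

definition LX :: "('k \<Rightarrow> 'v::monoid_add \<Rightarrow> 'w::comm_monoid_add) \<Rightarrow> ('k \<Rightarrow>\<^sub>0 'v) \<Rightarrow> 'w" where
  "LX h p = (\<Sum>k\<in>ks p. h k (lk p k))"

lemma LX_add: assumes "\<And>k. h k 0 = 0" "\<And>k a b. h k (a+b) = h k a + h k b"
  shows "LX h (p + q) = LX h p + LX h q"
  unfolding LX_def by (rule setsum_keys_plus_distrib) (simp_all add: assms)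

lemma LX_addf: assumes "\<And>k. h k 0 = 0" "\<And>k a b. h k (a+b) = h k a + h k b"
  shows "addf (LX h)"
  unfolding addf_def
proof (intro allI)
  fix x y show "LX h (x + y) = LX h x + LX h y" by (rule LX_add) (simp_all add: assms)
qed

lemma LX_single: "h k 0 = 0 \<Longrightarrow> LX h (sg k v) = h k v"
  by (cases "v = 0") (simp_all add: LX_def)

lemma LX_zero[simp]: "LX h 0 = 0"
  by (simp add: LX_def)

lemma LX_superset: assumes "finite F" "ks p \<subseteq> F" "\<And>k. h k 0 = 0"
  shows "LX h p = (\<Sum>k\<in>F. h k (lk p k))"
  unfolding LX_def
  by (rule sum.mono_neutral_left) (use assms in \<open>auto simp: in_keys_iff\<close>)

definition lin :: "(nat \<Rightarrow> nat) \<Rightarrow> mono \<Rightarrow> nat" where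
  "lin c = LX (\<lambda>k v. v * c k)"

lemma weight_lin: "weight = lin (\<lambda>k. 2^(k-1))"
  by (simp add: fun_eq_iff weight_def lin_def LX_def)

lemma deg_lin: "deg = lin (\<lambda>k. 2^k - 1)"
  by (simp add: fun_eq_iff deg_def lin_def LX_def)

lemma lin_add: "lin c (m + n) = lin c m + lin c n"
  unfolding lin_def by (rule LX_add) (simp_all add: algebra_simps)

lemma lin_addf: "addf (lin c)"
  by (simp add: addf_def lin_add)

lemma lin_zero[simp]: "lin c 0 = 0" by (simp add: lin_def)

lemma lin_single: "lin c (sg k e) = e * c k"
  unfolding lin_def by (rule LX_single) simp

lemma lin_xim: "lin c (xim k e) = (if k = 0 then 0 else e * c k)"
  by (simp add: xim_def lin_single)

lemma lin_superset: "finite F \<Longrightarrow> ks m \<subseteq> F \<Longrightarrow> lin c m = (\<Sum>k\<in>F. lk m k * c k)"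
  unfolding lin_def by (rule LX_superset) auto

lemma lin_term_le: "lin c m \<ge> lk m k * c k"
proof (cases "k \<in> ks m")
  case True
  have "lin c m = (\<Sum>k\<in>ks m. lk m k * c k)" by (rule lin_superset) auto
  then show ?thesis using True by (simp only:) (intro member_le_sum, auto)
qed (simp add: in_keys_iff)

lemma weight_add: "weight (m+n) = weight m + weight n" by (simp add: weight_lin lin_add)
lemma deg_add: "deg (m+n) = deg m + deg n" by (simp add: deg_lin lin_add)
lemma weight_xim: "weight (xim k e) = (if k = 0 then 0 else e * 2^(k-1))" by (simp add: weight_lin lin_xim)
lemma deg_xim: "deg (xim k e) = (if k = 0 then 0 else e * (2^k-1))" by (simp add: deg_lin lin_xim)
lemma weight_zero[simp]: "weight 0 = 0" by (simp add: weight_lin)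

definition Sh :: "mono \<Rightarrow> mono" where
  "Sh = LX (\<lambda>k v. if k = 0 then 0 else sg (Suc k) v)"

lemma Sh_add: "Sh (m + n) = Sh m + Sh n"
  unfolding Sh_def by (rule LX_add) (simp_all add: single_add)

lemma Sh_zero[simp]: "Sh 0 = 0" by (simp add: Sh_def)

lemma Sh_xim: "Sh (xim k e) = (if k = 0 then 0 else xim (Suc k) e)"
  unfolding xim_def Sh_def by (simp add: LX_single)

lemma lookup_Sh: "lk (Sh m) i = (if 2 \<le> i then lk m (i - 1) else 0)"
proof -
  have "lk (Sh m) i = (\<Sum>k\<in>ks m. if k = i - 1 \<and> 2 \<le> i then lk m k else 0)"
    unfolding Sh_def LX_def lookup_sum
    by (rule sum.cong) (auto simp: lookup_single when_def)
  also have "\<dots> = (if 2 \<le> i then lk m (i - 1) else 0)"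
    by (cases "2 \<le> i") (auto simp: in_keys_iff)
  finally show ?thesis .
qed

lemma lin_Sh: assumes "lk m 0 = 0" shows "lin c (Sh m) = lin (\<lambda>k. c (Suc k)) m"
proof -
  have "lin c (Sh m) = (\<Sum>k\<in>ks m. lin c (if k = 0 then 0 else sg (Suc k) (lk m k)))"
    unfolding Sh_def LX_def by (rule addf_sum[OF lin_addf])
  also have "\<dots> = (\<Sum>k\<in>ks m. lk m k * c (Suc k))"
    by (rule sum.cong) (use assms in \<open>auto simp: lin_single in_keys_iff\<close>)
  also have "\<dots> = lin (\<lambda>k. c (Suc k)) m" by (simp add: lin_def LX_def)
  finally show ?thesis .
qed

lemma Delta_mono_superset: assumes "finite F" "ks m \<subseteq> F"
  shows "Delta_mono m = (\<Prod>k\<in>F. Delta_xi k ^ lk m k)"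
  unfolding Delta_mono_def
  by (rule prod.mono_neutral_left) (use assms in \<open>auto simp: in_keys_iff\<close>)

lemma Delta_mono_add: "Delta_mono (m + n) = Delta_mono m * Delta_mono n"
proof -
  let ?F = "ks m \<union> ks n"
  have k: "ks (m+n) \<subseteq> ?F" by (rule keys_add)
  have "Delta_mono (m+n) = (\<Prod>k\<in>?F. Delta_xi k ^ lk (m+n) k)" by (rule Delta_mono_superset) (use k in auto)
  also have "\<dots> = (\<Prod>k\<in>?F. Delta_xi k ^ lk m k * Delta_xi k ^ lk n k)" by (simp add: lookup_add power_add)
  also have "\<dots> = Delta_mono m * Delta_mono n"
    by (simp add: prod.distrib Delta_mono_superset[of ?F m] Delta_mono_superset[of ?F n])
  finally show ?thesis .
qed

lemma Delta_mono_zero[simp]: "Delta_mono 0 = 1" by (simp add: Delta_mono_def)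

lemma Delta_mono_xim: "k \<noteq> 0 \<Longrightarrow> Delta_mono (xim k e) = Delta_xi k ^ e"
  by (cases "e = 0") (simp_all add: xim_def Delta_mono_def)


lemma pm_expand: "(p::'a \<Rightarrow>\<^sub>0 'b::comm_monoid_add) = (\<Sum>k\<in>ks p. sg k (lk p k))"
proof (rule poly_mapping_eqI)
  fix i
  have "lk (\<Sum>k\<in>ks p. sg k (lk p k)) i = (\<Sum>k\<in>ks p. if k = i then lk p k else 0)"
    unfolding lookup_sum by (rule sum.cong) (auto simp: lookup_single when_def)
  also have "\<dots> = lk p i" by (auto simp: in_keys_iff)
  finally show "lk p i = lk (\<Sum>k\<in>ks p. sg k (lk p k)) i" by simp
qed

lemma single_addf: "addf (sg a)"
  by (simp add: addf_def single_add)

lemma pm_induct_gen: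
  assumes "P 0" "\<And>X Y. P X \<Longrightarrow> P Y \<Longrightarrow> P (X+Y)" "\<And>k. k \<in> ks (p::'a \<Rightarrow>\<^sub>0 'b::comm_monoid_add) \<Longrightarrow> P (sg k (lk p k))"
  shows "P p"
proof -
  have fin: "finite (ks p)" by simp
  have "\<And>F. finite F \<Longrightarrow> F \<subseteq> ks p \<longrightarrow> P (\<Sum>k\<in>F. sg k (lk p k))"
  proof -
    fix F :: "'a set" assume "finite F"
    then show "F \<subseteq> ks p \<longrightarrow> P (\<Sum>k\<in>F. sg k (lk p k))"
    proof (induction F rule: finite_induct)
      case empty
      then show ?case using assms(1) by simp
    next
      case (insert x F)
      show ?case
      proof
        assume h: "insert x F \<subseteq> ks p"
        have "P (sg x (lk p x) + (\<Sum>k\<in>F. sg k (lk p k)))"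
          by (rule assms(2)) (use h insert.IH assms(3) in auto)
        then show "P (\<Sum>k\<in>insert x F. sg k (lk p k))" using insert.hyps by simp
      qed
    qed
  qed
  then have "P (\<Sum>k\<in>ks p. sg k (lk p k))" using fin by blast
  then show ?thesis using pm_expand[of p] by simp
qed

lemma BB_induct:
  assumes "P 0" "\<And>X Y. P X \<Longrightarrow> P Y \<Longrightarrow> P (X+Y)"
    "\<And>a m. m \<in> ks (lk (X::BB) a) \<Longrightarrow> P (sg a (sg m (lk (lk X a) m)))"
  shows "P X"
proof (rule pm_induct_gen[of P X])
  fix a assume "a \<in> ks X"
  show "P (sg a (lk X a))"
  proof (rule pm_induct_gen[of "\<lambda>v. P (sg a v)" "lk X a"])
    show "P (sg a 0)" using assms(1) by simp
    show "P (sg a (x + y))" if "P (sg a x)" "P (sg a y)" for x y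
      using assms(2)[OF that] by (simp add: single_add)
    show "P (sg a (sg m (lk (lk X a) m)))" if "m \<in> ks (lk X a)" for m using assms(3) that by blast
  qed
qed (use assms in auto)

lemma map_add: fixes g :: "'b::cancel_comm_monoid_add \<Rightarrow> 'c::cancel_comm_monoid_add"
  assumes "addf g" shows "Poly_Mapping.map g (X + Y) = Poly_Mapping.map g X + Poly_Mapping.map g (Y :: 'a \<Rightarrow>\<^sub>0 'b)"
  by (rule poly_mapping_eqI) (simp add: lookup_map0 addf_zero[OF assms] lookup_add assms[unfolded addf_def])

lemma map_addf: "addf g \<Longrightarrow> addf (Poly_Mapping.map (g :: 'b::cancel_comm_monoid_add \<Rightarrow> 'c::cancel_comm_monoid_add) :: ('a \<Rightarrow>\<^sub>0 'b) \<Rightarrow> _)"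
  by (simp add: addf_def map_add)

section \<open>the maps Ps\<close>

definition Ps :: "nat \<Rightarrow> mono \<Rightarrow> mono" where
  "Ps W m = Sh m + xim 1 (2 * (W - weight m))"

definition PsL :: "nat \<Rightarrow> mono vec \<Rightarrow> mono vec" where
  "PsL W = LX (\<lambda>m v. sg (Ps W m) v)"

definition PsB :: "nat \<Rightarrow> BB \<Rightarrow> BB" where
  "PsB W = Poly_Mapping.map (PsL W)"

definition RW :: "nat \<Rightarrow> BB \<Rightarrow> bool" where
  "RW W X \<longleftrightarrow> (\<forall>a. \<forall>m\<in>ks (lk X a). weight m \<le> W)"

lemma PsL_addf: "addf (PsL W)"
  unfolding PsL_def by (rule LX_addf) (simp_all only: single_add single_zero)

lemma PsL_single: "PsL W (sg m c) = sg (Ps W m) c"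
  unfolding PsL_def by (rule LX_single) simp

lemma PsB_addf: "addf (PsB W)"
  unfolding PsB_def by (rule map_addf[OF PsL_addf])

lemma PsB_add: "PsB W (X + Y) = PsB W X + PsB W Y"
  using PsB_addf unfolding addf_def by blast

lemma PsB_zero[simp]: "PsB W 0 = 0"
  using addf_zero[OF PsB_addf] .

lemma PsB_single: "PsB W (sg a (sg m c)) = sg a (sg (Ps W m) c)"
  unfolding PsB_def by (simp add: PsL_single addf_zero[OF PsL_addf])

lemma Ps_add: "weight m \<le> W1 \<Longrightarrow> weight n \<le> W2 \<Longrightarrow> Ps (W1 + W2) (m + n) = Ps W1 m + Ps W2 n"
  unfolding Ps_def by (simp add: Sh_add weight_add xim_add[symmetric] algebra_simps)

lemma RW_add: "RW W X \<Longrightarrow> RW W Y \<Longrightarrow> RW W (X + Y)"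
  unfolding RW_def using keys_add by (fastforce simp: lookup_add)

lemma RW_zero[simp]: "RW W 0" by (simp add: RW_def)

lemma RW_atom: "RW W X \<Longrightarrow> m \<in> ks (lk X a) \<Longrightarrow> weight m \<le> W"
  unfolding RW_def by blast

lemma RW_single: "weight m \<le> W \<Longrightarrow> RW W (sg a (sg m c))"
  unfolding RW_def by (auto simp: lookup_single when_def split: if_splits)

lemma mult_atoms: "sg a (sg m c) * sg b (sg n d) = (sg (a+b) (sg (m+n) (c*d)) :: BB)"
  by (simp add: mult_single)

lemma RW_mult: assumes "RW W1 X" "RW W2 Y" shows "RW (W1 + W2) (X * Y)"
proof (induction X rule: BB_induct)
  case (3 a m)
  have wm: "weight m \<le> W1" using RW_atom[OF assms(1) 3] .
  show ?case
  proof (induction Y rule: BB_induct)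
    case (3 b n)
    have "weight n \<le> W2" using RW_atom[OF assms(2) 3] .
    then show ?case using wm by (simp add: mult_atoms RW_single weight_add)
  qed (simp_all add: distrib_left RW_add)
qed (simp_all add: distrib_right RW_add)

lemma PsB_mult: assumes "RW W1 X" "RW W2 Y" shows "PsB (W1 + W2) (X * Y) = PsB W1 X * PsB W2 Y"
proof (induction X rule: BB_induct)
  case (3 a m)
  have wm: "weight m \<le> W1" using RW_atom[OF assms(1) 3] .
  show ?case
  proof (induction Y rule: BB_induct)
    case (3 b n)
    have "weight n \<le> W2" using RW_atom[OF assms(2) 3] .
    then have "Ps (W1 + W2) (m + n) = Ps W1 m + Ps W2 n" using wm by (simp add: Ps_add)
    then show ?case by (simp only: mult_atoms PsB_single)
  qed (simp_all add: distrib_left PsB_add)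
qed (simp_all add: distrib_right PsB_add)

lemma PsB_one: "PsB W 1 = sg 0 (sg (xim 1 (2 * W)) 1)"
proof -
  have "(1::BB) = sg 0 (sg 0 1)" by simp
  then have "PsB W 1 = sg 0 (sg (Ps W 0) 1)" by (metis PsB_single)
  then show ?thesis by (simp add: Ps_def)
qed

lemma RW_one: "RW W 1"
proof -
  have "(1::BB) = sg 0 (sg 0 1)" by simp
  then show ?thesis by (metis RW_single weight_zero zero_le)
qed

lemma PsB_pow: assumes "RW W X" shows "RW (n * W) (X ^ n) \<and> PsB (n * W) (X ^ n) = (PsB W X) ^ n"
proof (induction n)
  case 0
  have "PsB 0 1 = 1" by (simp add: PsB_one)
  then show ?case by (simp add: RW_one)
next
  case (Suc n)
  have e: "Suc n * W = W + n * W" by simp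
  show ?case unfolding e power_Suc
    using RW_mult[OF assms, of "n*W"] PsB_mult[OF assms, of "n*W"] Suc by simp
qed


lemma RW_sum: "(\<And>i. i \<in> I \<Longrightarrow> RW W (g i)) \<Longrightarrow> RW W (sum g I)"
proof (induction I rule: infinite_finite_induct)
  case (insert x F) then show ?case by (simp add: RW_add)
qed simp_all

lemma weight_xim_gen: "weight (xim (k - i) (2^i)) \<le> 2^(k-1)"
proof (cases "k - i = 0")
  case False
  then have "i + (k - i - 1) = k - 1" by simp
  then have "(2::nat)^i * 2^(k-i-1) = 2^(k-1)" by (metis power_add)
  then show ?thesis using False by (simp add: weight_xim)
qed (simp add: weight_xim)

lemma RW_Dx: "RW (2^(k-1)) (Delta_xi k)"
  unfolding Delta_xi_def
  apply (rule RW_sum)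
  apply (rule RW_single)
  apply (rule weight_xim_gen)
  done

lemma Ps_gen: assumes "1 \<le> k" "i \<le> k" shows "Ps (2^(k-1)) (xim (k - i) (2^i)) = xim (Suc k - i) (2^i)"
proof (cases "i = k")
  case True
  have "2 * 2^(k-1) = (2::nat)^k" using assms(1) by (cases k) simp_all
  then show ?thesis using True by (simp add: Ps_def)
next
  case False
  then have "i + (k - i - 1) = k - 1" using assms by simp
  then have w: "(2::nat)^i * 2^(k-i-1) = 2^(k-1)" by (metis power_add)
  have "Sh (xim (k - i) (2^i)) = xim (Suc k - i) (2^i)" using False assms by (simp add: Sh_xim Suc_diff_le)
  moreover have "weight (xim (k - i) (2^i)) = 2^(k-1)" using False assms w by (simp add: weight_xim)
  ultimately show ?thesis by (simp add: Ps_def)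
qed

lemma Dx_Suc: assumes "1 \<le> k"
  shows "Delta_xi (Suc k) = PsB (2^(k-1)) (Delta_xi k) + sg (xim (Suc k) 1) 1"
proof -
  have "PsB (2^(k-1)) (Delta_xi k) = (\<Sum>i\<in>{0..k}. PsB (2^(k-1)) (sg (xim i 1) (sg (xim (k - i) (2^i)) 1)))"
    unfolding Delta_xi_def by (rule addf_sum[OF PsB_addf])
  also have "\<dots> = (\<Sum>i\<in>{0..k}. sg (xim i 1) (sg (xim (Suc k - i) (2^i)) 1))"
  proof (rule sum.cong)
    fix i assume "i \<in> {0..k}"
    then have "i \<le> k" by simp
    then show "PsB (2^(k-1)) (sg (xim i 1) (sg (xim (k - i) (2^i)) 1)) = sg (xim i 1) (sg (xim (Suc k - i) (2^i)) 1)"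
      using Ps_gen[OF assms, of i] by (simp only: PsB_single)
  qed simp
  finally have a: "PsB (2^(k-1)) (Delta_xi k) = (\<Sum>i\<in>{0..k}. sg (xim i 1) (sg (xim (Suc k - i) (2^i)) 1))" .
  have "Delta_xi (Suc k) = (\<Sum>i\<in>{0..k}. sg (xim i 1) (sg (xim (Suc k - i) (2^i)) 1)) + sg (xim (Suc k) 1) (sg (xim 0 (2^Suc k)) 1)"
    unfolding Delta_xi_def by (simp add: sum.atLeast0_atMost_Suc)
  then show ?thesis using a by simp
qed

lemma Gen: assumes "1 \<le> k" "\<not> A2mon (xim (Suc k) (2^r))"
  shows "truncA2 (Delta_xi (Suc k) ^ (2^r)) = truncA2 (PsB (2^r * 2^(k-1)) (Delta_xi k ^ (2^r)))"
proof -
  have p: "PsB (2^r * 2^(k-1)) (Delta_xi k ^ (2^r)) = PsB (2^(k-1)) (Delta_xi k) ^ (2^r)"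
    using PsB_pow[OF RW_Dx] by blast
  have y: "(sg (xim (Suc k) 1) (1::mono vec) :: BB) ^ (2^r) = sg (xim (Suc k) (2^r)) 1"
    using pow_single_xim[of "Suc k" 1 "1::mono vec" "2^r"] by simp
  have t0: "truncA2 (sg (xim (Suc k) (2^r)) (1::mono vec) :: BB) = 0"
    using assms(2) by (simp add: trunc_zero_iff)
  have "Delta_xi (Suc k) ^ (2^r) = PsB (2^(k-1)) (Delta_xi k) ^ (2^r) + sg (xim (Suc k) (2^r)) 1"
    using Dx_Suc[OF assms(1)] frobBpow y by simp
  then show ?thesis using p t0 by (simp add: trunc_add)
qed

definition Good :: "mono \<Rightarrow> bool" where
  "Good m \<longleftrightarrow> RW (weight m) (Delta_mono m) \<and>
     truncA2 (Delta_mono (Sh m)) = truncA2 (PsB (weight m) (Delta_mono m))"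

lemma Good_zero: "Good 0"
proof -
  have "PsB 0 1 = 1" by (simp add: PsB_one)
  then show ?thesis by (simp add: Good_def RW_one)
qed

lemma Good_add: assumes "Good m" "Good n" shows "Good (m + n)"
proof -
  have r1: "RW (weight m) (Delta_mono m)" and t1: "truncA2 (Delta_mono (Sh m)) = truncA2 (PsB (weight m) (Delta_mono m))"
    and r2: "RW (weight n) (Delta_mono n)" and t2: "truncA2 (Delta_mono (Sh n)) = truncA2 (PsB (weight n) (Delta_mono n))"
    using assms by (auto simp: Good_def)
  have "truncA2 (Delta_mono (Sh (m + n))) = truncA2 (Delta_mono (Sh m) * Delta_mono (Sh n))"
    by (simp add: Sh_add Delta_mono_add)
  also have "\<dots> = truncA2 (PsB (weight m) (Delta_mono m) * Delta_mono (Sh n))" by (rule trunc_mult_cong[OF t1])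
  also have "\<dots> = truncA2 (PsB (weight m) (Delta_mono m) * PsB (weight n) (Delta_mono n))" by (rule trunc_mult_cong2[OF t2])
  also have "\<dots> = truncA2 (PsB (weight (m + n)) (Delta_mono (m + n)))"
    by (simp add: weight_add Delta_mono_add PsB_mult[OF r1 r2])
  finally show ?thesis using RW_mult[OF r1 r2] by (simp add: Good_def weight_add Delta_mono_add)
qed

lemma Good_gen: assumes "1 \<le> k" "\<not> A2mon (xim (Suc k) (2^r))"
  shows "Good (xim k (2^r))"
proof -
  have w: "weight (xim k (2^r)) = 2^r * 2^(k-1)" using assms by (simp add: weight_xim)
  have "RW (2^r * 2^(k-1)) (Delta_xi k ^ (2^r))"
    using PsB_pow[OF RW_Dx] by blast
  then show ?thesis using Gen[OF assms] assms(1) w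
    by (simp add: Good_def Delta_mono_xim Sh_xim)
qed

lemma Good_mult: assumes "Good (xim k q)" shows "Good (xim k (c * q))"
proof (induction c)
  case 0 then show ?case by (simp add: Good_zero)
next
  case (Suc c)
  have "xim k (Suc c * q) = xim k q + xim k (c * q)" by (simp add: xim_add[symmetric])
  then show ?case using Good_add[OF assms Suc.IH] by simp
qed

lemma not_A2_1: "\<not> A2mon (xim (Suc 1) (2^2))" by (simp add: A2mon_def lookup_xim)
lemma not_A2_2: "\<not> A2mon (xim (Suc 2) (2^1))" by (simp add: A2mon_def lookup_xim)
lemma not_A2_3: "3 \<le> k \<Longrightarrow> \<not> A2mon (xim (Suc k) (2^0))" by (auto simp: A2mon_def xim_def)

lemma Good_AA1: assumes "AA1mon m" shows "Good m"
proof (rule pm_induct_gen[of Good m])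
  show "Good 0" by (rule Good_zero)
  show "Good (X + Y)" if "Good X" "Good Y" for X Y using Good_add that .
next
  fix k assume k: "k \<in> ks m"
  have k0: "k \<noteq> 0"
  proof
    assume "k = 0" with k assms show False by (simp add: AA1mon_def)
  qed
  have e: "sg k (lk m k) = xim k (lk m k)" using k0 by (simp add: xim_def)
  consider "k = 1" | "k = 2" | "3 \<le> k" using k0 by linarith
  then show "Good (sg k (lk m k))"
  proof cases
    case 1
    obtain c where "lk m k = c * 2^2" using assms 1 by (auto simp: AA1mon_def elim!: dvdE)
    then show ?thesis using e 1 Good_mult[OF Good_gen[OF _ not_A2_1]] by simp
  next
    case 2
    obtain c where "lk m k = c * 2^1" using assms 2 by (auto simp: AA1mon_def elim!: dvdE)
    then show ?thesis using e 2 Good_mult[OF Good_gen[OF _ not_A2_2]] by simp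
  next
    case 3
    have "lk m k = lk m k * 2^0" by simp
    then show ?thesis using e 3 Good_mult[OF Good_gen[OF _ not_A2_3[OF 3]], of "lk m k"] by simp
  qed
qed

lemma Dx1_pow: assumes "8 dvd e" shows "truncA2 (Delta_xi 1 ^ e) = truncA2 (sg 0 (sg (xim 1 e) 1))"
proof -
  obtain c where c: "e = 8 * c" using assms by (auto elim!: dvdE)
  define U :: BB where "U = sg 0 (sg (xim 1 1) 1)"
  define Z :: BB where "Z = sg (xim 1 1) 1"
  have D: "Delta_xi 1 = U + Z" by (simp add: Delta_xi_def U_def Z_def)
  have "(U + Z)^8 = U^8 + Z^8" using frobBpow[of U Z 3] by simp
  moreover have "truncA2 (Z^8) = 0" unfolding Z_def pow_single_xim
    by (simp add: trunc_zero_iff A2mon_def lookup_xim)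
  ultimately have "truncA2 ((U+Z)^8) = truncA2 (U^8)" by (simp add: trunc_add)
  then have "truncA2 (((U+Z)^8)^c) = truncA2 ((U^8)^c)" by (rule trunc_pow_cong)
  moreover have "(U^8)^c = sg 0 (sg (xim 1 e) 1)" unfolding U_def c
    by (simp add: power_mult[symmetric] pow_single_single_xim mult.commute)
  ultimately show ?thesis unfolding D c by (simp add: power_mult)
qed

lemma weight_AA1_dvd: assumes "AA1mon m" shows "4 dvd weight m"
proof -
  have "weight m = (\<Sum>k\<in>ks m. lk m k * 2^(k-1))" by (simp add: weight_def)
  moreover have "4 dvd lk m k * 2^(k-1)" if "k \<in> ks m" for k
  proof -
    have k0: "k \<noteq> 0"
    proof
      assume "k = 0" with that assms show False by (simp add: AA1mon_def)
    qed
    consider "k = 1" | "k = 2" | "3 \<le> k" using k0 by linarith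
    then show ?thesis
    proof cases
      case 1 then show ?thesis using assms by (simp add: AA1mon_def)
    next
      case 2 then show ?thesis using assms by (auto simp: AA1mon_def)
    next
      case 3
      then have "k - 1 = 2 + (k - 3)" by simp
      then have "(2::nat)^(k-1) = 2^2 * 2^(k-3)" by (metis power_add)
      then have "(4::nat) dvd 2^(k-1)" by simp
      then show ?thesis by simp
    qed
  qed
  ultimately show ?thesis by (simp add: dvd_sum)
qed

lemma mono_key: assumes "AA1mon m" "weight m \<le> 4 * j"
  shows "truncA2 (Delta_mono (Ps (4 * j) m)) = truncA2 (PsB (4 * j) (Delta_mono m))"
proof -
  define V where "V = 4 * j - weight m"
  have G: "Good m" by (rule Good_AA1[OF assms(1)])
  have r: "RW (weight m) (Delta_mono m)" and t: "truncA2 (Delta_mono (Sh m)) = truncA2 (PsB (weight m) (Delta_mono m))"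
    using G by (auto simp: Good_def)
  have "4 dvd V" unfolding V_def using weight_AA1_dvd[OF assms(1)] by (simp add: dvd_diff_nat)
  then have d8: "8 dvd 2 * V" by auto
  have e1: "Delta_mono (Ps (4 * j) m) = Delta_mono (Sh m) * Delta_xi 1 ^ (2 * V)"
    by (simp add: Ps_def V_def Delta_mono_add Delta_mono_xim)
  have e2: "PsB (4 * j) (Delta_mono m) = PsB (weight m) (Delta_mono m) * sg 0 (sg (xim 1 (2 * V)) 1)"
  proof -
    have "PsB (weight m + V) (Delta_mono m * 1) = PsB (weight m) (Delta_mono m) * PsB V 1"
      by (rule PsB_mult[OF r RW_one])
    moreover have "weight m + V = 4 * j" using assms(2) V_def by simp
    ultimately show ?thesis by (simp add: PsB_one)
  qed
  have "truncA2 (Delta_mono (Sh m) * Delta_xi 1 ^ (2 * V)) = truncA2 (PsB (weight m) (Delta_mono m) * Delta_xi 1 ^ (2 * V))"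
    by (rule trunc_mult_cong[OF t])
  also have "\<dots> = truncA2 (PsB (weight m) (Delta_mono m) * sg 0 (sg (xim 1 (2 * V)) 1))"
    by (rule trunc_mult_cong2[OF Dx1_pow[OF d8]])
  finally show ?thesis using e1 e2 by simp
qed


section \<open>the map f\<close>

definition phi :: "nat \<Rightarrow> mono \<times> mono \<Rightarrow> mono" where
  "phi j p = Ps (4 * j) (fst p) + snd p"

definition fmap :: "nat \<Rightarrow> (mono \<times> mono) vec \<Rightarrow> mono vec" where
  "fmap j = LX (\<lambda>p v. sg (phi j p) v)"

lemma fmap_addf: "addf (fmap j)"
  unfolding fmap_def by (rule LX_addf) (simp_all only: single_add single_zero)

lemma fmap_add: "fmap j (x + y) = fmap j x + fmap j y"
  using fmap_addf unfolding addf_def by blast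

lemma fmap_zero[simp]: "fmap j 0 = 0" by (simp add: fmap_def)

lemma fmap_single: "fmap j (sg p c) = sg (phi j p) c"
  unfolding fmap_def by (rule LX_single) simp

lemma map_zero_pm[simp]: "Poly_Mapping.map g 0 = 0"
  by (rule poly_mapping_eqI) (simp add: lookup_map)

lemma lookup2_tscal: "lk (lk (tscal c X) a) m = c * lk (lk X a) m"
  by (simp add: tscal_def lookup_map0)

lemma tscal_one[simp]: "tscal 1 X = X"
  by (rule poly_mapping_eqI, rule poly_mapping_eqI) (simp add: lookup2_tscal)

lemma tscal_zero[simp]: "tscal 0 X = 0"
  by (rule poly_mapping_eqI, rule poly_mapping_eqI) (simp add: lookup2_tscal)

lemma tscal_add: "tscal (a + b) X = tscal a X + tscal b X"
  by (rule poly_mapping_eqI, rule poly_mapping_eqI) (simp only: lookup2_tscal lookup_add distrib_right)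

lemma Delta_addf: "addf Delta"
proof -
  have "Delta = LX (\<lambda>m c. tscal c (Delta_mono m))" by (simp add: fun_eq_iff Delta_def LX_def)
  moreover have "addf (LX (\<lambda>m c. tscal c (Delta_mono m)))" by (rule LX_addf) (simp_all only: tscal_add tscal_zero)
  ultimately show ?thesis by simp
qed

lemma Delta_single: "Delta (sg m 1) = Delta_mono m"
  by (simp add: Delta_def)

lemma psi2_addf: "addf psi2"
  using Delta_addf by (simp add: addf_def psi2_def trunc_add)

lemma Delta_tens_addf: "addf Delta_tens"
proof -
  have "Delta_tens = LX (\<lambda>mn c. tscal c (tcomb (Delta_mono (fst mn)) (Delta_mono (snd mn))))"
    by (simp add: fun_eq_iff Delta_tens_def LX_def)
  moreover have "addf (LX (\<lambda>mn c. tscal c (tcomb (Delta_mono (fst mn)) (Delta_mono (snd mn)))))"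
    by (rule LX_addf) (simp_all only: tscal_add tscal_zero)
  ultimately show ?thesis by simp
qed

lemma psiT_addf: "addf psiT"
  using Delta_tens_addf by (simp add: addf_def psiT_def trunc_add)

lemma Delta_tens_single: "Delta_tens (sg (m, n) 1) = tcomb (Delta_mono m) (Delta_mono n)"
  by (simp add: Delta_tens_def)

lemma map_expand: "g 0 = 0 \<Longrightarrow> Poly_Mapping.map g p = (\<Sum>a\<in>ks p. sg a (g (lk p a)))"
proof (rule poly_mapping_eqI)
  fix i assume g: "g 0 = 0"
  have "lk (\<Sum>a\<in>ks p. sg a (g (lk p a))) i = (\<Sum>a\<in>ks p. if a = i then g (lk p a) else 0)"
    unfolding lookup_sum by (rule sum.cong) (auto simp: lookup_single when_def)
  also have "\<dots> = g (lk p i)" using g by (auto simp: in_keys_iff)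
  finally show "lk (Poly_Mapping.map g p) i = lk (\<Sum>a\<in>ks p. sg a (g (lk p a))) i"
    by (simp add: lookup_map0 g)
qed

lemma trunc_map: "g 0 = 0 \<Longrightarrow> truncA2 (Poly_Mapping.map g Z) = Poly_Mapping.map g (truncA2 Z)"
  by (rule poly_mapping_eqI) (simp add: lookup_trunc lookup_map0)

lemma fmap_tensor: "fmap j (tensor u v) = PsL (4 * j) u * v"
proof -
  have "fmap j (tensor u v) = (\<Sum>m\<in>ks u. \<Sum>n\<in>ks v. fmap j (sg (m, n) (lk u m * lk v n)))"
    unfolding tensor_def by (simp add: addf_sum[OF fmap_addf])
  also have "\<dots> = (\<Sum>m\<in>ks u. \<Sum>n\<in>ks v. sg (Ps (4 * j) m) (lk u m) * sg n (lk v n))"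
    by (simp add: fmap_single phi_def mult_single)
  also have "\<dots> = (\<Sum>m\<in>ks u. sg (Ps (4 * j) m) (lk u m)) * (\<Sum>n\<in>ks v. sg n (lk v n))"
    by (simp add: sum_product)
  also have "\<dots> = PsL (4 * j) u * v"
    by (simp add: PsL_def LX_def pm_expand[of v, symmetric])
  finally show ?thesis .
qed

lemma fmap_tcomb: "Poly_Mapping.map (fmap j) (tcomb X Y) = PsB (4 * j) X * Y"
proof -
  have a: "addf (Poly_Mapping.map (fmap j) :: (mono \<Rightarrow>\<^sub>0 (mono \<times> mono) vec) \<Rightarrow> _)"
    by (rule map_addf[OF fmap_addf])
  have "Poly_Mapping.map (fmap j) (tcomb X Y) = (\<Sum>a\<in>ks X. \<Sum>b\<in>ks Y.
      Poly_Mapping.map (fmap j) (sg (a + b) (tensor (lk X a) (lk Y b))))"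
    unfolding tcomb_def by (simp add: addf_sum[OF a])
  also have "\<dots> = (\<Sum>a\<in>ks X. \<Sum>b\<in>ks Y. sg a (PsL (4 * j) (lk X a)) * sg b (lk Y b))"
    by (simp add: fmap_tensor mult_single)
  also have "\<dots> = (\<Sum>a\<in>ks X. sg a (PsL (4 * j) (lk X a))) * (\<Sum>b\<in>ks Y. sg b (lk Y b))"
    by (simp add: sum_product)
  also have "\<dots> = PsB (4 * j) X * Y"
    by (simp add: PsB_def map_expand addf_zero[OF PsL_addf] pm_expand[of Y, symmetric])
  finally show ?thesis .
qed

lemma comod_basis: assumes "AA1mon m" "weight m \<le> 4 * j"
  shows "psi2 (fmap j (sg (m, n) 1)) = Poly_Mapping.map (fmap j) (psiT (sg (m, n) 1))"
proof -
  have "psi2 (fmap j (sg (m, n) 1)) = truncA2 (Delta_mono (Ps (4 * j) m) * Delta_mono n)"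
    by (simp add: fmap_single phi_def psi2_def Delta_single Delta_mono_add)
  also have "\<dots> = truncA2 (PsB (4 * j) (Delta_mono m) * Delta_mono n)"
    by (rule trunc_mult_cong[OF mono_key[OF assms]])
  also have "\<dots> = Poly_Mapping.map (fmap j) (psiT (sg (m, n) 1))"
  proof -
    have "Poly_Mapping.map (fmap j) (truncA2 (tcomb (Delta_mono m) (Delta_mono n)))
      = truncA2 (Poly_Mapping.map (fmap j) (tcomb (Delta_mono m) (Delta_mono n)))"
      by (rule trunc_map[symmetric]) simp
    then show ?thesis by (simp add: psiT_def Delta_tens_single fmap_tcomb)
  qed
  finally show ?thesis .
qed


section \<open>combinatorics of monomials\<close>

lemma weight_term_le: "lk m k * 2^(k-1) \<le> weight m"
  unfolding weight_lin by (rule lin_term_le)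

lemma n1_char: assumes "n \<in> N1basis 1"
  shows "lk n 0 = 0 \<and> (lk n 1 = 0 \<or> lk n 1 = 4) \<and> (lk n 2 = 0 \<or> lk n 2 = 2) \<and> lk n 3 \<le> 1 \<and> (\<forall>i\<ge>4. lk n i = 0)"
proof -
  have a: "AA1mon n" and w: "weight n \<le> 4" using assms by (auto simp: N1basis_def)
  have 0: "lk n 0 = 0" using a by (simp add: AA1mon_def in_keys_iff)
  have t1: "lk n 1 \<le> 4" using weight_term_le[of n 1] w by simp
  have d1: "4 dvd lk n 1" using a by (simp add: AA1mon_def)
  have 1: "lk n 1 = 0 \<or> lk n 1 = 4" using t1 d1 by (auto elim!: dvdE)
  have t2: "lk n 2 * 2 \<le> 4" using weight_term_le[of n 2] w by simp
  have d2: "2 dvd lk n 2" using a by (simp add: AA1mon_def)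
  have 2: "lk n 2 = 0 \<or> lk n 2 = 2" using t2 d2 by (auto elim!: dvdE)
  have 3: "lk n 3 \<le> 1" using weight_term_le[of n 3] w by simp
  have 4: "lk n i = 0" if "4 \<le> i" for i
  proof -
    have "(2::nat)^3 \<le> 2^(i-1)" using that by (intro power_increasing) auto
    then have "lk n i * 8 \<le> lk n i * 2^(i-1)" by simp
    then have "lk n i * 8 \<le> 4" using weight_term_le[of n i] w by linarith
    then show ?thesis by simp
  qed
  show ?thesis using 0 1 2 3 4 by blast
qed

lemma AA1_lk0: "AA1mon m \<Longrightarrow> lk m 0 = 0"
  by (simp add: AA1mon_def in_keys_iff)

lemma lookup_phi: "lk (phi j (m, n)) i = (if 2 \<le> i then lk m (i - 1) else 0) + (if i = 1 then 2 * (4 * j - weight m) else 0) + lk n i"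
  by (simp add: phi_def Ps_def lookup_add lookup_Sh lookup_xim)

lemma weight_Sh: "lk m 0 = 0 \<Longrightarrow> weight (Sh m) = 2 * weight m"
proof -
  assume h: "lk m 0 = 0"
  have "weight (Sh m) = lin (\<lambda>k. 2^(Suc k - 1)) m" unfolding weight_lin by (rule lin_Sh[OF h])
  also have "\<dots> = (\<Sum>k\<in>ks m. lk m k * 2^k)" by (simp add: lin_superset)
  also have "\<dots> = (\<Sum>k\<in>ks m. 2 * (lk m k * 2^(k-1)))"
  proof (rule sum.cong)
    fix k assume "k \<in> ks m"
    then have "k \<noteq> 0" using h by (cases k) (auto simp: in_keys_iff)
    then show "lk m k * 2^k = 2 * (lk m k * 2^(k-1))" by (cases k) auto
  qed simp
  also have "\<dots> = 2 * weight m" by (simp add: weight_def sum_distrib_left)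
  finally show ?thesis .
qed

lemma deg_Sh: "lk m 0 = 0 \<Longrightarrow> deg (Sh m) = deg m + 2 * weight m"
proof -
  assume h: "lk m 0 = 0"
  have "deg (Sh m) = lin (\<lambda>k. 2^(Suc k) - 1) m" unfolding deg_lin by (rule lin_Sh[OF h])
  also have "\<dots> = (\<Sum>k\<in>ks m. lk m k * (2^(Suc k) - 1))" by (simp add: lin_superset)
  also have "\<dots> = (\<Sum>k\<in>ks m. lk m k * (2^k - 1) + 2 * (lk m k * 2^(k-1)))"
  proof (rule sum.cong)
    fix k assume "k \<in> ks m"
    then have "k \<noteq> 0" using h by (cases k) (auto simp: in_keys_iff)
    then obtain k' where k': "k = Suc k'" by (cases k) auto
    have "(1::nat) \<le> 2^k'" by simp
    then have "(2::nat)^Suc (Suc k') - 1 = (2^Suc k' - 1) + 2 * 2^k'" by simp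
    then show "lk m k * (2^(Suc k) - 1) = lk m k * (2^k - 1) + 2 * (lk m k * 2^(k-1))"
      using k' by (simp add: algebra_simps)
  qed simp
  also have "\<dots> = deg m + 2 * weight m" by (simp add: deg_def weight_def sum.distrib sum_distrib_left)
  finally show ?thesis .
qed

lemma phi_weight: assumes "AA1mon m" "weight m \<le> 4 * j"
  shows "weight (phi j (m, n)) = 8 * j + weight n"
  using assms by (simp add: phi_def Ps_def weight_add weight_Sh AA1_lk0 weight_xim)

lemma phi_deg: assumes "AA1mon m" "weight m \<le> 4 * j"
  shows "deg (phi j (m, n)) = deg m + deg n + 8 * j"
  using assms by (simp add: phi_def Ps_def deg_add deg_Sh AA1_lk0 deg_xim)

lemma mod_lemma4: "4 dvd (a::nat) \<Longrightarrow> b = 0 \<or> b = 2 \<Longrightarrow> (a + b) mod 4 = b"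
  by (auto elim!: dvdE; presburger)
lemma mod_lemma8: "8 dvd (a::nat) \<Longrightarrow> b = 0 \<or> b = 4 \<Longrightarrow> (a + b) mod 8 = b"
  by (auto elim!: dvdE; presburger)
lemma mod_lemma2: "2 dvd (a::nat) \<Longrightarrow> b \<le> 1 \<Longrightarrow> (a + b) mod 2 = b"
  by (auto elim!: dvdE; presburger)

lemma phi_lookups: assumes "AA1mon m" "weight m \<le> 4 * j" "n \<in> N1basis 1"
  shows "lk (phi j (m, n)) 0 = 0"
    and "lk (phi j (m, n)) 1 mod 8 = lk n 1"
    and "lk (phi j (m, n)) 2 mod 4 = lk n 2"
    and "lk (phi j (m, n)) 3 mod 2 = lk n 3"
    and "lk (phi j (m, n)) 1 = 2 * (4 * j - weight m) + lk n 1"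
    and "lk (phi j (m, n)) 2 = lk m 1 + lk n 2"
    and "lk (phi j (m, n)) 3 = lk m 2 + lk n 3"
    and "\<And>i. 4 \<le> i \<Longrightarrow> lk (phi j (m, n)) i = lk m (i - 1)"
proof -
  note nc = n1_char[OF assms(3)]
  have d: "4 dvd weight m" by (rule weight_AA1_dvd[OF assms(1)])
  then have d8: "8 dvd 2 * (4 * j - weight m)" by (auto simp: dvd_diff_nat)
  have a1: "4 dvd lk m 1" and a2: "2 dvd lk m 2" using assms(1) by (auto simp: AA1mon_def)
  show "lk (phi j (m, n)) 0 = 0" using nc by (simp add: lookup_phi)
  show e1: "lk (phi j (m, n)) 1 = 2 * (4 * j - weight m) + lk n 1" by (simp add: lookup_phi)
  show e2: "lk (phi j (m, n)) 2 = lk m 1 + lk n 2" by (simp add: lookup_phi)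
  show e3: "lk (phi j (m, n)) 3 = lk m 2 + lk n 3" by (simp add: lookup_phi)
  show "lk (phi j (m, n)) 1 mod 8 = lk n 1" unfolding e1 by (rule mod_lemma8[OF d8]) (use nc in auto)
  show "lk (phi j (m, n)) 2 mod 4 = lk n 2" unfolding e2 by (rule mod_lemma4[OF a1]) (use nc in auto)
  show "lk (phi j (m, n)) 3 mod 2 = lk n 3" unfolding e3 by (rule mod_lemma2[OF a2]) (use nc in auto)
  show "\<And>i. 4 \<le> i \<Longrightarrow> lk (phi j (m, n)) i = lk m (i - 1)" using nc by (simp add: lookup_phi)
qed

lemma phi_inj: assumes "AA1mon m" "weight m \<le> 4 * j" "n \<in> N1basis 1"
   "AA1mon m'" "weight m' \<le> 4 * j" "n' \<in> N1basis 1"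
   "phi j (m, n) = phi j (m', n')"
  shows "m = m' \<and> n = n'"
proof -
  note L = phi_lookups[OF assms(1-3)] and L' = phi_lookups[OF assms(4-6)]
  note nc = n1_char[OF assms(3)] and nc' = n1_char[OF assms(6)]
  have e: "\<And>i. lk (phi j (m, n)) i = lk (phi j (m', n')) i" using assms(7) by simp
  have n1: "lk n 1 = lk n' 1" using L(2) L'(2) e[of 1] by simp
  have n2: "lk n 2 = lk n' 2" using L(3) L'(3) e[of 2] by simp
  have n3: "lk n 3 = lk n' 3" using L(4) L'(4) e[of 3] by simp
  have "lk n i = lk n' i" for i
  proof -
    consider "i = 0" | "i = 1" | "i = 2" | "i = 3" | "4 \<le> i" by linarith
    then show ?thesis by cases (use nc nc' n1 n2 n3 in auto)
  qed
  then have nn: "n = n'" by (rule poly_mapping_eqI)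
  have "lk m i = lk m' i" for i
  proof -
    consider "i = 0" | "i = 1" | "i = 2" | "3 \<le> i" by linarith
    then show ?thesis
    proof cases
      case 1 then show ?thesis using AA1_lk0[OF assms(1)] AA1_lk0[OF assms(4)] by simp
    next
      case 2 then show ?thesis using L(6) L'(6) e[of 2] n2 by simp
    next
      case 3 then show ?thesis using L(7) L'(7) e[of 3] n3 by simp
    next
      case 4 then have "4 \<le> Suc i" by simp
      then show ?thesis using L(8)[of "Suc i"] L'(8)[of "Suc i"] e[of "Suc i"] by simp
    qed
  qed
  then have "m = m'" by (rule poly_mapping_eqI)
  then show ?thesis using nn by simp
qed

definition Dom :: "nat \<Rightarrow> (mono \<times> mono) set" where
  "Dom j = N1basis j \<times> N1basis 1"

lemma Dom_D: "p \<in> Dom j \<Longrightarrow> AA1mon (fst p) \<and> weight (fst p) \<le> 4 * j \<and> snd p \<in> N1basis 1"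
  by (auto simp: Dom_def N1basis_def)

lemma phi_inj_on: "inj_on (phi j) (Dom j)"
proof (rule inj_onI)
  fix p q assume "p \<in> Dom j" "q \<in> Dom j" "phi j p = phi j q"
  then show "p = q" using phi_inj[of "fst p" j "snd p" "fst q" "snd q"] Dom_D[of p j] Dom_D[of q j]
    by (cases p, cases q) auto
qed

lemma fmap_expand: "fmap j x = (\<Sum>p\<in>ks x. sg (phi j p) (lk x p))"
  by (simp add: fmap_def LX_def)

lemma keys_fmap: "ks (fmap j x) \<subseteq> phi j ` ks x"
proof -
  have "ks (\<Sum>p\<in>ks x. sg (phi j p) (lk x p)) \<subseteq> (\<Union>p\<in>ks x. ks (sg (phi j p) (lk x p)))" by (rule keys_sum)
  also have "\<dots> \<subseteq> phi j ` ks x" by auto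
  finally show ?thesis unfolding fmap_expand .
qed

lemma lookup_fmap: assumes "ks x \<subseteq> Dom j" "q \<in> Dom j" shows "lk (fmap j x) (phi j q) = lk x q"
proof -
  have "lk (fmap j x) (phi j q) = (\<Sum>p\<in>ks x. if p = q then lk x p else 0)"
    unfolding fmap_expand lookup_sum
  proof (rule sum.cong)
    fix p assume p: "p \<in> ks x"
    have "phi j p = phi j q \<longleftrightarrow> p = q" using inj_onD[OF phi_inj_on] p assms by blast
    then show "lk (sg (phi j p) (lk x p)) (phi j q) = (if p = q then lk x p else 0)"
      by (simp add: lookup_single when_def)
  qed simp
  also have "\<dots> = lk x q" by (auto simp: in_keys_iff)
  finally show ?thesis .
qed

lemma phi_N1: assumes "p \<in> Dom j" shows "phi j p \<in> N1basis (2 * j + 1)"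
proof -
  obtain m n where p: "p = (m, n)" by (cases p)
  have a: "AA1mon m" "weight m \<le> 4 * j" "n \<in> N1basis 1" using Dom_D[OF assms] p by auto
  note L = phi_lookups[OF a] and nc = n1_char[OF a(3)]
  have d: "4 dvd weight m" by (rule weight_AA1_dvd[OF a(1)])
  then have d8: "8 dvd 2 * (4 * j - weight m)" by (auto simp: dvd_diff_nat)
  have "4 dvd lk (phi j (m, n)) 1" unfolding L(5) using d8 nc by (auto intro!: dvd_add elim!: dvdE)
  moreover have "2 dvd lk (phi j (m, n)) 2" unfolding L(6) using a(1) nc by (auto simp: AA1mon_def)
  moreover have "0 \<notin> ks (phi j (m, n))" using L(1) by (simp add: in_keys_iff)
  moreover have "weight (phi j (m, n)) \<le> 4 * (2 * j + 1)" using phi_weight[OF a(1,2)] a(3) by (simp add: N1basis_def)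
  ultimately show ?thesis using p by (simp add: N1basis_def AA1mon_def)
qed


section \<open>tau and the filtration\<close>

lemma lookup_tauR: "lk (tauR m) i = (if i = 1 then lk m 1 mod 8 else if i = 2 then lk m 2 mod 4 else if i = 3 then lk m 3 mod 2 else 0)"
  by (simp add: tauR_def lookup_add lookup_xim)

lemma lookup_tauL: "lk (tauL m) i = lk m i - lk (tauR m) i"
  by (simp add: tauL_def lookup_minus)

lemma tauR_le: "lk (tauR m) i \<le> lk m i"
  by (simp add: lookup_tauR)

lemma tau_sum: "tauL m + tauR m = m"
  by (rule poly_mapping_eqI) (simp add: lookup_add lookup_tauL tauR_le)

lemma weight_tau: "weight m = weight (tauL m) + weight (tauR m)"
  by (metis tau_sum weight_add)

lemma weight_tauR: "weight (tauR m) = lk m 1 mod 8 + 2 * (lk m 2 mod 4) + 4 * (lk m 3 mod 2)"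
  by (simp add: tauR_def weight_add weight_xim)

lemma AA2_tauL: assumes "AA1mon m" shows "AA2mon (tauL m)"
proof -
  have "lk (tauL m) 0 = 0" using AA1_lk0[OF assms] by (simp add: lookup_tauL)
  moreover have "8 dvd lk (tauL m) 1" by (simp add: lookup_tauL lookup_tauR minus_mod_eq_mult_div)
  moreover have "4 dvd lk (tauL m) 2" by (simp add: lookup_tauL lookup_tauR minus_mod_eq_mult_div)
  moreover have "2 dvd lk (tauL m) 3" by (simp add: lookup_tauL lookup_tauR minus_mod_eq_mult_div)
  ultimately show ?thesis by (simp add: AA2mon_def in_keys_iff)
qed

lemma weight_AA2_dvd: assumes "AA2mon m" shows "8 dvd weight m"
proof -
  have "weight m = (\<Sum>k\<in>ks m. lk m k * 2^(k-1))" by (simp add: weight_def)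
  moreover have "8 dvd lk m k * 2^(k-1)" if "k \<in> ks m" for k
  proof -
    have k0: "k \<noteq> 0"
    proof
      assume "k = 0" with that assms show False by (simp add: AA2mon_def)
    qed
    consider "k = 1" | "k = 2" | "k = 3" | "4 \<le> k" using k0 by linarith
    then show ?thesis
    proof cases
      case 1 then show ?thesis using assms by (simp add: AA2mon_def)
    next
      case 2 then show ?thesis using assms by (auto simp: AA2mon_def)
    next
      case 3 then show ?thesis using assms by (auto simp: AA2mon_def)
    next
      case 4
      then have "k - 1 = 3 + (k - 4)" by simp
      then have "(2::nat)^(k-1) = 2^3 * 2^(k-4)" by (metis power_add)
      then have "(8::nat) dvd 2^(k-1)" by simp
      then show ?thesis by simp
    qed
  qed
  ultimately show ?thesis by (simp add: dvd_sum)
qed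

lemma Fil_iff: "p \<in> Fil j \<longleftrightarrow> (\<forall>\<mu>\<in>ks p. AA1mon \<mu> \<and> 8 * j \<le> weight (tauL \<mu>))"
proof -
  have "(\<exists>k\<ge>j. tauL \<mu> \<in> M2basis k) \<longleftrightarrow> 8 * j \<le> weight (tauL \<mu>)" if "AA1mon \<mu>" for \<mu>
  proof
    assume "\<exists>k\<ge>j. tauL \<mu> \<in> M2basis k"
    then show "8 * j \<le> weight (tauL \<mu>)" by (auto simp: M2basis_def)
  next
    assume h: "8 * j \<le> weight (tauL \<mu>)"
    have a: "AA2mon (tauL \<mu>)" by (rule AA2_tauL[OF that])
    obtain k where k: "weight (tauL \<mu>) = 8 * k" using weight_AA2_dvd[OF a] by (auto elim!: dvdE)
    then have "j \<le> k" using h by simp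
    then show "\<exists>k\<ge>j. tauL \<mu> \<in> M2basis k" using a k by (auto simp: M2basis_def)
  qed
  note eq = this
  show ?thesis
  proof
    assume h: "p \<in> Fil j"
    show "\<forall>\<mu>\<in>ks p. AA1mon \<mu> \<and> 8 * j \<le> weight (tauL \<mu>)"
    proof
      fix \<mu> assume "\<mu> \<in> ks p"
      then have a: "AA1mon \<mu>" and e: "\<exists>k\<ge>j. tauL \<mu> \<in> M2basis k" using h by (auto simp: Fil_def)
      then show "AA1mon \<mu> \<and> 8 * j \<le> weight (tauL \<mu>)" using eq[OF a] by simp
    qed
  next
    assume "\<forall>\<mu>\<in>ks p. AA1mon \<mu> \<and> 8 * j \<le> weight (tauL \<mu>)"
    then show "p \<in> Fil j" using eq by (simp add: Fil_def)
  qed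
qed

lemma tauR_phi: assumes "p \<in> Dom j" shows "tauR (phi j p) = snd p"
proof -
  obtain m n where p: "p = (m, n)" by (cases p)
  have a: "AA1mon m" "weight m \<le> 4 * j" "n \<in> N1basis 1" using Dom_D[OF assms] p by auto
  note L = phi_lookups[OF a] and nc = n1_char[OF a(3)]
  have "lk (tauR (phi j (m, n))) i = lk n i" for i
  proof -
    consider "i = 0" | "i = 1" | "i = 2" | "i = 3" | "4 \<le> i" by linarith
    then show ?thesis by cases (use L nc in \<open>auto simp: lookup_tauR\<close>)
  qed
  then show ?thesis using p by (auto intro: poly_mapping_eqI)
qed

lemma phi_Fil: assumes "p \<in> Dom j" shows "AA1mon (phi j p) \<and> 8 * j \<le> weight (tauL (phi j p))"
proof -
  obtain m n where p: "p = (m, n)" by (cases p)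
  have a: "AA1mon m" "weight m \<le> 4 * j" "n \<in> N1basis 1" using Dom_D[OF assms] p by auto
  have "AA1mon (phi j p)" using phi_N1[OF assms] by (simp add: N1basis_def)
  moreover have "weight (phi j p) = weight (tauL (phi j p)) + weight n"
    using weight_tau[of "phi j p"] tauR_phi[OF assms] p by simp
  ultimately show ?thesis using phi_weight[OF a(1,2)] p by simp
qed

definition Uf :: "mono \<Rightarrow> mono" where
  "Uf = LX (\<lambda>k v. if k \<le> 1 then 0 else sg (k - 1) v)"

lemma lookup_Uf: "lk (Uf t) i = (if 1 \<le> i then lk t (Suc i) else 0)"
proof -
  have "lk (Uf t) i = (\<Sum>k\<in>ks t. if k = Suc i \<and> 1 \<le> i then lk t k else 0)"
    unfolding Uf_def LX_def lookup_sum
    by (rule sum.cong) (auto simp: lookup_single when_def)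
  also have "\<dots> = (if 1 \<le> i then lk t (Suc i) else 0)"
    by (cases "1 \<le> i") (auto simp: in_keys_iff)
  finally show ?thesis .
qed

lemma Sh_Uf: assumes "lk t 0 = 0" shows "t = xim 1 (lk t 1) + Sh (Uf t)"
proof (rule poly_mapping_eqI)
  fix i :: nat
  consider "i = 0" | "i = 1" | "2 \<le> i" by linarith
  then show "lk t i = lk (xim 1 (lk t 1) + Sh (Uf t)) i"
  proof cases
    case 1 then show ?thesis using assms by (simp add: lookup_add lookup_xim lookup_Sh)
  next
    case 2 then show ?thesis by (simp add: lookup_add lookup_xim lookup_Sh)
  next
    case 3
    then have "1 \<le> i - 1" "Suc (i - 1) = i" by auto
    then have "lk (Sh (Uf t)) i = lk t i" using 3 by (simp add: lookup_Sh lookup_Uf)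
    then show ?thesis using 3 by (simp add: lookup_add lookup_xim)
  qed
qed

definition pre :: "mono \<Rightarrow> mono \<times> mono" where
  "pre \<mu> = (Uf (tauL \<mu>), tauR \<mu>)"

lemma pre_props: assumes "AA1mon \<mu>" "weight \<mu> \<le> 8 * j + 4" "8 * j \<le> weight (tauL \<mu>)"
  shows "pre \<mu> \<in> Dom j \<and> phi j (pre \<mu>) = \<mu>"
proof -
  define t where "t = tauL \<mu>"
  have a2: "AA2mon t" unfolding t_def by (rule AA2_tauL[OF assms(1)])
  have wt: "weight t = 8 * j"
  proof -
    obtain c where c: "weight t = 8 * c" using weight_AA2_dvd[OF a2] by (auto elim!: dvdE)
    have "weight t \<le> weight \<mu>" using weight_tau[of \<mu>] t_def by simp
    then show ?thesis using c assms(2,3) t_def by simp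
  qed
  have t0: "lk t 0 = 0" using a2 by (simp add: AA2mon_def in_keys_iff)
  have te: "t = xim 1 (lk t 1) + Sh (Uf t)" by (rule Sh_Uf[OF t0])
  have u0: "lk (Uf t) 0 = 0" by (simp add: lookup_Uf)
  have wtu: "weight t = lk t 1 + 2 * weight (Uf t)"
    using arg_cong[OF te, of weight] by (simp add: weight_add weight_xim weight_Sh[OF u0])
  have u1: "lk (Uf t) 1 = lk t 2" using lookup_Uf[of t 1] by (simp add: numeral_2_eq_2)
  have u2: "lk (Uf t) 2 = lk t 3" using lookup_Uf[of t 2] by (simp add: numeral_3_eq_3)
  have am: "AA1mon (Uf t)" using a2 u0 u1 u2 by (simp add: AA1mon_def AA2mon_def in_keys_iff)
  have wm: "weight (Uf t) \<le> 4 * j" using wtu wt by simp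
  have n0: "lk (tauR \<mu>) 0 = 0" by (simp add: lookup_tauR)
  have d1: "4 dvd lk \<mu> 1" "2 dvd lk \<mu> 2" using assms(1) by (auto simp: AA1mon_def)
  have an: "AA1mon (tauR \<mu>)"
  proof -
    have "4 dvd lk \<mu> 1 mod 8" using d1(1) by (simp add: dvd_mod)
    moreover have "2 dvd lk \<mu> 2 mod 4" using d1(2) by (simp add: dvd_mod)
    ultimately show ?thesis using n0 by (simp add: AA1mon_def lookup_tauR in_keys_iff)
  qed
  have wn: "weight (tauR \<mu>) \<le> 4" using weight_tau[of \<mu>] t_def wt assms(2) by simp
  have "Ps (4 * j) (Uf t) = t"
  proof -
    have "2 * (4 * j - weight (Uf t)) = lk t 1" using wtu wt by simp
    then show ?thesis unfolding Ps_def using te by (simp add: add.commute)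
  qed
  then have "phi j (pre \<mu>) = \<mu>" by (simp add: phi_def pre_def t_def tau_sum)
  moreover have "pre \<mu> \<in> Dom j" using am wm an wn by (simp add: pre_def Dom_def N1basis_def t_def)
  ultimately show ?thesis by simp
qed


lemma Src_Dom: "x \<in> Src j \<longleftrightarrow> ks x \<subseteq> Dom j"
  by (simp add: Src_def Dom_def)

lemma bit_key: "p \<in> ks (x :: 'a \<Rightarrow>\<^sub>0 bit) \<Longrightarrow> lk x p = 1"
  by (simp add: in_keys_iff)

lemma map_id_pm: "Poly_Mapping.map (\<lambda>x. x) p = p"
  by (rule poly_mapping_eqI) (simp add: lookup_map)

lemma comod: assumes "x \<in> Src j"
  shows "psi2 (fmap j x) = Poly_Mapping.map (fmap j) (psiT x)"
proof (rule pm_induct_gen[of "\<lambda>x. psi2 (fmap j x) = Poly_Mapping.map (fmap j) (psiT x)" x])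
  show "psi2 (fmap j 0) = Poly_Mapping.map (fmap j) (psiT 0)"
    by (simp add: addf_zero[OF psi2_addf] addf_zero[OF psiT_addf])
next
  fix X Y assume that: "psi2 (fmap j X) = Poly_Mapping.map (fmap j) (psiT X)"
    "psi2 (fmap j Y) = Poly_Mapping.map (fmap j) (psiT Y)"
  show "psi2 (fmap j (X + Y)) = Poly_Mapping.map (fmap j) (psiT (X + Y))"
  proof -
    have m: "Poly_Mapping.map (fmap j) (psiT X + psiT Y) = Poly_Mapping.map (fmap j) (psiT X) + Poly_Mapping.map (fmap j) (psiT Y)"
      by (rule map_add[OF fmap_addf])
    show ?thesis using psi2_addf psiT_addf m that
      by (simp add: addf_def fmap_add)
  qed
next
  fix p assume p: "p \<in> ks x"
  then have pd: "p \<in> Dom j" using assms by (auto simp: Src_Dom)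
  obtain m n where pm: "p = (m, n)" by (cases p)
  have a: "AA1mon m" "weight m \<le> 4 * j" using Dom_D[OF pd] pm by auto
  show "psi2 (fmap j (sg p (lk x p))) = Poly_Mapping.map (fmap j) (psiT (sg p (lk x p)))"
    using comod_basis[OF a, of n] bit_key[OF p] pm by simp
qed

theorem lemma7p1:
  fixes j :: nat
  assumes "1 \<le> j"
  shows "\<exists>(f :: (mono \<times> mono) vec \<Rightarrow> mono vec) (g :: mono vec \<Rightarrow> mono vec).
    (\<forall>x\<in>Src j. \<forall>y\<in>Src j. f (x + y) = f x + f y) \<and>
    (\<forall>x\<in>Src j. f x \<in> N1 (2 * j + 1)) \<and>
    inj_on f (Src j) \<and>
    (\<forall>x\<in>Src j. \<forall>d. homog (\<lambda>mn. deg (fst mn) + deg (snd mn) + 8 * j) d x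
                      \<longrightarrow> homog deg d (f x)) \<and>
    (\<forall>x\<in>Src j. psi2 (f x) = Poly_Mapping.map f (psiT x)) \<and>
    (\<forall>x\<in>N1 (2 * j + 1). \<forall>y\<in>N1 (2 * j + 1). g (x + y) = g x + g y) \<and>
    (\<forall>x\<in>N1 (2 * j + 1). g x \<in> AA1) \<and>
    (\<forall>x\<in>N1 (2 * j + 1). \<forall>d. homog deg d x
                      \<longrightarrow> (\<exists>r\<in>Fil j. homog deg d (g x - r))) \<and>
    (\<forall>x\<in>N1 (2 * j + 1). \<forall>a.
        Poly_Mapping.lookup (psi2 (g x) - Poly_Mapping.map g (psi2 x)) a \<in> Fil j) \<and>
    (\<forall>y\<in>AA1. \<exists>x\<in>N1 (2 * j + 1). g x - y \<in> Fil j) \<and>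
    (\<forall>x\<in>N1 (2 * j + 1). g x \<in> Fil j \<longleftrightarrow> (\<exists>z\<in>Src j. f z = x))"
proof (rule exI[of _ "fmap j"], rule exI[of _ "\<lambda>x. x"], intro conjI)
  have zF: "0 \<in> Fil j" by (simp add: Fil_iff)
  show "\<forall>x\<in>Src j. \<forall>y\<in>Src j. fmap j (x + y) = fmap j x + fmap j y" by (simp add: fmap_add)
  show "\<forall>x\<in>Src j. fmap j x \<in> N1 (2 * j + 1)"
  proof
    fix x assume "x \<in> Src j"
    then have "ks x \<subseteq> Dom j" by (simp add: Src_Dom)
    then have "phi j ` ks x \<subseteq> N1basis (2 * j + 1)" using phi_N1 by blast
    then show "fmap j x \<in> N1 (2 * j + 1)" using keys_fmap[of j x] by (simp add: N1_def)
  qed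
  show "inj_on (fmap j) (Src j)"
  proof (rule inj_onI)
    fix x y assume x: "x \<in> Src j" and y: "y \<in> Src j" and e: "fmap j x = fmap j y"
    have kx: "ks x \<subseteq> Dom j" and ky: "ks y \<subseteq> Dom j" using x y by (simp_all add: Src_Dom)
    show "x = y"
    proof (rule poly_mapping_eqI)
      fix q
      show "lk x q = lk y q"
      proof (cases "q \<in> Dom j")
        case True
        then show ?thesis using lookup_fmap[OF kx True] lookup_fmap[OF ky True] e by simp
      next
        case False
        then have "q \<notin> ks x" "q \<notin> ks y" using kx ky by auto
        then show ?thesis by (simp add: in_keys_iff)
      qed
    qed
  qed
  show "\<forall>x\<in>Src j. \<forall>d. homog (\<lambda>mn. deg (fst mn) + deg (snd mn) + 8 * j) d x \<longrightarrow> homog deg d (fmap j x)"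
  proof (intro ballI allI impI)
    fix x d assume x: "x \<in> Src j" and h: "homog (\<lambda>mn. deg (fst mn) + deg (snd mn) + 8 * j) d x"
    have kx: "ks x \<subseteq> Dom j" using x by (simp add: Src_Dom)
    show "homog deg d (fmap j x)" unfolding homog_def
    proof
      fix \<mu> assume "\<mu> \<in> ks (fmap j x)"
      then obtain p where p: "p \<in> ks x" "\<mu> = phi j p" using keys_fmap by blast
      obtain m n where pm: "p = (m, n)" by (cases p)
      have "p \<in> Dom j" using p kx by auto
      then have a: "AA1mon m" "weight m \<le> 4 * j" using Dom_D pm by auto
      have "deg m + deg n + 8 * j = d" using h p pm by (auto simp: homog_def)
      then show "deg \<mu> = d" using phi_deg[OF a, of n] p pm by simp
    qed
  qed
  show "\<forall>x\<in>Src j. psi2 (fmap j x) = Poly_Mapping.map (fmap j) (psiT x)" using comod by blast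
  show "\<forall>x\<in>N1 (2 * j + 1). \<forall>y\<in>N1 (2 * j + 1). x + y = x + y" by simp
  show "\<forall>x\<in>N1 (2 * j + 1). x \<in> AA1" by (auto simp: N1_def N1basis_def AA1_def)
  show "\<forall>x\<in>N1 (2 * j + 1). \<forall>d. homog deg d x \<longrightarrow> (\<exists>r\<in>Fil j. homog deg d (x - r))"
  proof (intro ballI allI impI)
    fix x d assume "homog deg d x"
    then show "\<exists>r\<in>Fil j. homog deg d (x - r)" using zF by (intro bexI[of _ 0]) simp_all
  qed
  show "\<forall>x\<in>N1 (2 * j + 1). \<forall>a. lk (psi2 x - Poly_Mapping.map (\<lambda>x. x) (psi2 x)) a \<in> Fil j"
    using zF by (simp add: map_id_pm)
  show "\<forall>y\<in>AA1. \<exists>x\<in>N1 (2 * j + 1). x - y \<in> Fil j"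
  proof
    fix y assume y: "y \<in> AA1"
    define S where "S = ks y \<inter> {\<mu>. weight (tauL \<mu>) < 8 * j}"
    define x where "x = (\<Sum>\<mu>\<in>S. sg \<mu> (lk y \<mu>))"
    have fS: "finite S" by (simp add: S_def)
    have lx: "lk x \<mu> = (if \<mu> \<in> S then lk y \<mu> else 0)" for \<mu>
    proof -
      have "lk x \<mu> = (\<Sum>\<nu>\<in>S. if \<nu> = \<mu> then lk y \<nu> else 0)"
        unfolding x_def lookup_sum by (rule sum.cong) (auto simp: lookup_single when_def)
      also have "\<dots> = (if \<mu> \<in> S then lk y \<mu> else 0)" using fS by simp
      finally show ?thesis .
    qed
    have "ks x \<subseteq> N1basis (2 * j + 1)"
    proof
      fix \<mu> assume "\<mu> \<in> ks x"
      then have mS: "\<mu> \<in> S" using lx by (auto simp: in_keys_iff split: if_splits)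
      then have a: "AA1mon \<mu>" and wl: "weight (tauL \<mu>) < 8 * j" using y by (auto simp: S_def AA1_def)
      obtain c where c: "weight (tauL \<mu>) = 8 * c" using weight_AA2_dvd[OF AA2_tauL[OF a]] by (auto elim!: dvdE)
      have d1: "4 dvd lk \<mu> 1" "2 dvd lk \<mu> 2" using a by (auto simp: AA1mon_def)
      have "lk \<mu> 1 mod 8 \<le> 4"
      proof -
        obtain q where "lk \<mu> 1 = 4 * q" using d1(1) by (auto elim!: dvdE)
        then show ?thesis by presburger
      qed
      moreover have "lk \<mu> 2 mod 4 \<le> 2"
      proof -
        obtain q where "lk \<mu> 2 = 2 * q" using d1(2) by (auto elim!: dvdE)
        then show ?thesis by presburger
      qed
      moreover have "lk \<mu> 3 mod 2 \<le> 1" by simp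
      ultimately have "weight (tauR \<mu>) \<le> 12" by (simp add: weight_tauR)
      moreover have "weight (tauL \<mu>) \<le> 8 * j - 8" using c wl by simp
      ultimately have "weight \<mu> \<le> 4 * (2 * j + 1)" using weight_tau[of \<mu>] assms by simp
      then show "\<mu> \<in> N1basis (2 * j + 1)" using a by (simp add: N1basis_def)
    qed
    then have xN: "x \<in> N1 (2 * j + 1)" by (simp add: N1_def)
    have "x - y \<in> Fil j" unfolding Fil_iff
    proof
      fix \<mu> assume "\<mu> \<in> ks (x - y)"
      then have "lk x \<mu> + lk y \<mu> \<noteq> 0" by (simp add: in_keys_iff vec_diff lookup_add)
      then have "\<mu> \<in> ks y" "\<mu> \<notin> S" using lx by (auto simp: in_keys_iff split: if_splits)
      then show "AA1mon \<mu> \<and> 8 * j \<le> weight (tauL \<mu>)" using y by (auto simp: S_def AA1_def)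
    qed
    then show "\<exists>x\<in>N1 (2 * j + 1). x - y \<in> Fil j" using xN by blast
  qed
  show "\<forall>x\<in>N1 (2 * j + 1). x \<in> Fil j \<longleftrightarrow> (\<exists>z\<in>Src j. fmap j z = x)"
  proof (intro ballI iffI)
    fix x assume xN: "x \<in> N1 (2 * j + 1)" and xF: "x \<in> Fil j"
    have P: "pre \<mu> \<in> Dom j \<and> phi j (pre \<mu>) = \<mu>" if "\<mu> \<in> ks x" for \<mu>
    proof (rule pre_props)
      show "AA1mon \<mu>" "8 * j \<le> weight (tauL \<mu>)" using xF that by (auto simp: Fil_iff)
      show "weight \<mu> \<le> 8 * j + 4" using xN that by (auto simp: N1_def N1basis_def)
    qed
    define z where "z = (\<Sum>\<mu>\<in>ks x. sg (pre \<mu>) (1::bit))"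
    have "ks z \<subseteq> (\<Union>\<mu>\<in>ks x. ks (sg (pre \<mu>) (1::bit)))" unfolding z_def by (rule keys_sum)
    also have "\<dots> \<subseteq> Dom j" using P by auto
    finally have zS: "z \<in> Src j" by (simp add: Src_Dom)
    have "fmap j z = (\<Sum>\<mu>\<in>ks x. fmap j (sg (pre \<mu>) 1))" unfolding z_def by (rule addf_sum[OF fmap_addf])
    also have "\<dots> = (\<Sum>\<mu>\<in>ks x. sg \<mu> (lk x \<mu>))"
      by (rule sum.cong) (simp_all add: fmap_single P bit_key)
    also have "\<dots> = x" by (rule pm_expand[symmetric])
    finally show "\<exists>z\<in>Src j. fmap j z = x" using zS by blast
  next
    fix x assume "\<exists>z\<in>Src j. fmap j z = x"
    then obtain z where z: "z \<in> Src j" "fmap j z = x" by blast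
    have kz: "ks z \<subseteq> Dom j" using z by (simp add: Src_Dom)
    show "x \<in> Fil j" unfolding Fil_iff
    proof
      fix \<mu> assume "\<mu> \<in> ks x"
      then obtain p where "p \<in> ks z" "\<mu> = phi j p" using keys_fmap z(2) by blast
      then show "AA1mon \<mu> \<and> 8 * j \<le> weight (tauL \<mu>)" using phi_Fil kz by blast
    qed
  qed
qed

end
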